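(* Let $k$ be a function assigning to each prime power $q$ a positive integer $k(q)$, and suppose $k(q)=o(q)$, i.e. $k(q)/q\to 0$ as $q\to\infty$ over prime powers. Then for every sufficiently large prime power $q$, writing $k=k(q)$, there exists a finite connected graph $G$ of order $2q^{2}+(1-k)q$ in which every vertex has degree either $q+1-k$ or $q$, and whose cop number satisfies $q+1-k\le c(G)\le q$.
   Context: Graphs are finite, simple and connected, and are considered reflexive: each vertex carries a loop, so that a player may stay on its vertex. The game of Cops and Robbers on a graph $G$ is played as follows. First, a set of $m$ cops each choose a vertex (several cops may choose the same vertex). Then the robber chooses a vertex. After that, the players alternate turns, the cops moving first. On the cops' turn, each cop either stays on its vertex or moves to an adjacent vertex. On the robber's turn, the robber either stays or moves to an adjacent vertex. Both sides have full information at all times. The cops win if, after finitely many rounds, some cop occupies the same vertex as the robber. The cop number $c(G)$ is the least $m$ such that $m$ cops have a strategy that wins against every robber strategy. The order of a graph is its number of vertices. *)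

theory Defs
  imports Main "HOL-Number_Theory.Prime_Powers"
begin

definition simple_graph :: "'a set \<Rightarrow> ('a \<Rightarrow> 'a \<Rightarrow> bool) \<Rightarrow> bool" where
  "simple_graph V E \<longleftrightarrow> finite V \<and> (\<forall>u v. E u v \<longrightarrow> u \<in> V \<and> v \<in> V)
     \<and> (\<forall>u v. E u v \<longrightarrow> E v u) \<and> (\<forall>u. \<not> E u u)"

definition connected_graph :: "'a set \<Rightarrow> ('a \<Rightarrow> 'a \<Rightarrow> bool) \<Rightarrow> bool" where
  "connected_graph V E \<longleftrightarrow> V \<noteq> {} \<and> (\<forall>u\<in>V. \<forall>v\<in>V. E\<^sup>*\<^sup>* u v)"

definition degree :: "'a set \<Rightarrow> ('a \<Rightarrow> 'a \<Rightarrow> bool) \<Rightarrow> 'a \<Rightarrow> nat" where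
  "degree V E u = card {v \<in> V. E u v}"

definition step_ok :: "('a \<Rightarrow> 'a \<Rightarrow> bool) \<Rightarrow> 'a \<Rightarrow> 'a \<Rightarrow> bool" where
  "step_ok E u v \<longleftrightarrow> u = v \<or> E u v"

definition valid_config :: "'a set \<Rightarrow> nat \<Rightarrow> (nat \<Rightarrow> 'a) \<Rightarrow> bool" where
  "valid_config V m C \<longleftrightarrow> (\<forall>i<m. C i \<in> V)"

text \<open>Cop strategy: given the history of cop configurations and robber positions
  (both of the same length n), returns the next cop configuration
  (for n = 0 the initial placement).  Robber strategy: given the cop history of
  length n+1 and robber history of length n, returns the robber's next position
  (for n = 0 the initial choice).\<close>

definition legal_cop_strategy ::
  "'a set \<Rightarrow> ('a \<Rightarrow> 'a \<Rightarrow> bool) \<Rightarrow> nat \<Rightarrow> ((nat \<Rightarrow> 'a) list \<Rightarrow> 'a list \<Rightarrow> (nat \<Rightarrow> 'a)) \<Rightarrow> bool" where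
  "legal_cop_strategy V E m sc \<longleftrightarrow>
     valid_config V m (sc [] []) \<and>
     (\<forall>Cs Rs. Cs \<noteq> [] \<and> valid_config V m (last Cs) \<longrightarrow>
        valid_config V m (sc Cs Rs) \<and> (\<forall>i<m. step_ok E (last Cs i) (sc Cs Rs i)))"

definition legal_robber_strategy ::
  "'a set \<Rightarrow> ('a \<Rightarrow> 'a \<Rightarrow> bool) \<Rightarrow> ((nat \<Rightarrow> 'a) list \<Rightarrow> 'a list \<Rightarrow> 'a) \<Rightarrow> bool" where
  "legal_robber_strategy V E sr \<longleftrightarrow>
     (\<forall>Cs. sr Cs [] \<in> V) \<and>
     (\<forall>Cs Rs. Rs \<noteq> [] \<and> last Rs \<in> V \<longrightarrow> sr Cs Rs \<in> V \<and> step_ok E (last Rs) (sr Cs Rs))"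

text \<open>History after round n: n+1 cop configurations and n+1 robber positions.\<close>
fun game_hist ::
  "((nat \<Rightarrow> 'a) list \<Rightarrow> 'a list \<Rightarrow> (nat \<Rightarrow> 'a)) \<Rightarrow> ((nat \<Rightarrow> 'a) list \<Rightarrow> 'a list \<Rightarrow> 'a)
     \<Rightarrow> nat \<Rightarrow> (nat \<Rightarrow> 'a) list \<times> 'a list" where
  "game_hist sc sr 0 = (let c0 = sc [] [] in ([c0], [sr [c0] []]))"
| "game_hist sc sr (Suc n) = (let (Cs, Rs) = game_hist sc sr n; c = sc Cs Rs; Cs' = Cs @ [c]
                               in (Cs', Rs @ [sr Cs' Rs]))"

definition cop_pos where "cop_pos sc sr t = fst (game_hist sc sr t) ! t"
definition rob_pos where "rob_pos sc sr t = snd (game_hist sc sr t) ! t"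

text \<open>Capture: at time t the robber (after choosing/moving) shares a vertex with a cop,
  or a cop moves onto the robber in the next cops' turn.\<close>
definition captured :: "nat \<Rightarrow> ((nat \<Rightarrow> 'a) list \<Rightarrow> 'a list \<Rightarrow> (nat \<Rightarrow> 'a))
     \<Rightarrow> ((nat \<Rightarrow> 'a) list \<Rightarrow> 'a list \<Rightarrow> 'a) \<Rightarrow> bool" where
  "captured m sc sr \<longleftrightarrow> (\<exists>t. \<exists>i<m. cop_pos sc sr t i = rob_pos sc sr t
                                     \<or> cop_pos sc sr (Suc t) i = rob_pos sc sr t)"

definition cops_win :: "'a set \<Rightarrow> ('a \<Rightarrow> 'a \<Rightarrow> bool) \<Rightarrow> nat \<Rightarrow> bool" where
  "cops_win V E m \<longleftrightarrow> (\<exists>sc. legal_cop_strategy V E m sc \<and>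
      (\<forall>sr. legal_robber_strategy V E sr \<longrightarrow> captured m sc sr))"

definition cop_number :: "'a set \<Rightarrow> ('a \<Rightarrow> 'a \<Rightarrow> bool) \<Rightarrow> nat" where
  "cop_number V E = (LEAST m. cops_win V E m)"

end

theory Submission
  imports Defs "HOL-Algebra.Algebraic_Closure" "HOL-Number_Theory.Residues"
begin

context cring begin

fun lsum :: "(nat \<Rightarrow> 'a) \<Rightarrow> nat \<Rightarrow> 'a" where
  "lsum f 0 = \<zero>" | "lsum f (Suc n) = lsum f n \<oplus> f n"

lemma lsum_closed: "(\<And>i. i < n \<Longrightarrow> f i \<in> carrier R) \<Longrightarrow> lsum f n \<in> carrier R"
  by (induction n) auto

lemma lsum_cong: "(\<And>i. i < n \<Longrightarrow> f i = g i) \<Longrightarrow> lsum f n = lsum g n"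
  by (induction n) auto

lemma lsum_add: "(\<And>i. i < n \<Longrightarrow> f i \<in> carrier R) \<Longrightarrow> (\<And>i. i < n \<Longrightarrow> g i \<in> carrier R) \<Longrightarrow>
  lsum (\<lambda>i. f i \<oplus> g i) n = lsum f n \<oplus> lsum g n"
proof (induction n)
  case (Suc n)
  have c: "lsum f n \<in> carrier R" "lsum g n \<in> carrier R" "f n \<in> carrier R" "g n \<in> carrier R"
    using Suc.prems by (auto intro: lsum_closed)
  show ?case using Suc c by (simp add: a_ac)
qed auto

lemma lsum_ldistr: "c \<in> carrier R \<Longrightarrow> (\<And>i. i < n \<Longrightarrow> f i \<in> carrier R) \<Longrightarrow>
  c \<otimes> lsum f n = lsum (\<lambda>i. c \<otimes> f i) n"
proof (induction n)
  case (Suc n)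
  have c: "lsum f n \<in> carrier R" "f n \<in> carrier R"
    using Suc.prems by (auto intro: lsum_closed)
  show ?case using Suc c by (simp add: r_distr)
qed auto

lemma lsum_shift: "(\<And>i. i < Suc n \<Longrightarrow> f i \<in> carrier R) \<Longrightarrow>
  lsum f (Suc n) = f 0 \<oplus> lsum (\<lambda>i. f (Suc i)) n"
proof (induction n)
  case (Suc n)
  have c: "lsum (\<lambda>i. f (Suc i)) n \<in> carrier R" "f 0 \<in> carrier R" "f (Suc n) \<in> carrier R"
    using Suc.prems by (auto intro: lsum_closed)
  show ?case using Suc c by (simp add: a_ac)
qed auto

lemma lsum_zero: "(\<And>i. i < n \<Longrightarrow> f i = \<zero>) \<Longrightarrow> lsum f n = \<zero>"
  by (induction n) auto

lemma binomial_ring: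
  assumes x: "x \<in> carrier R" and y: "y \<in> carrier R"
  shows "(x \<oplus> y) [^] n = lsum (\<lambda>k. [(n choose k)] \<cdot> (x [^] k \<otimes> y [^] (n - k))) (Suc n)"
proof (induction n)
  case 0
  then show ?case using x y by simp
next
  case (Suc n)
  define T where "T = (\<lambda>k. x [^] k \<otimes> y [^] (Suc n - k))"
  have Tc: "T k \<in> carrier R" for k using x y by (simp add: T_def)
  have IH: "(x \<oplus> y) [^] n = lsum (\<lambda>k. [(n choose k)] \<cdot> (x [^] k \<otimes> y [^] (n - k))) (Suc n)"
    by (rule Suc.IH)
  have S1: "x \<otimes> lsum (\<lambda>k. [(n choose k)] \<cdot> (x [^] k \<otimes> y [^] (n - k))) (Suc n)
      = lsum (\<lambda>k. [(n choose k)] \<cdot> T (Suc k)) (Suc n)"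
  proof -
    have "x \<otimes> lsum (\<lambda>k. [(n choose k)] \<cdot> (x [^] k \<otimes> y [^] (n - k))) (Suc n)
       = lsum (\<lambda>k. x \<otimes> ([(n choose k)] \<cdot> (x [^] k \<otimes> y [^] (n - k)))) (Suc n)"
      using x y by (intro lsum_ldistr) auto
    also have "\<dots> = lsum (\<lambda>k. [(n choose k)] \<cdot> T (Suc k)) (Suc n)"
    proof (rule lsum_cong)
      fix i assume i: "i < Suc n"
      have "x \<otimes> ([(n choose i)] \<cdot> (x [^] i \<otimes> y [^] (n - i))) = [(n choose i)] \<cdot> (x \<otimes> (x [^] i \<otimes> y [^] (n - i)))"
        using x y add_pow_rdistr by simp
      also have "x \<otimes> (x [^] i \<otimes> y [^] (n - i)) = T (Suc i)"
        using x y i by (simp add: T_def m_assoc[symmetric] nat_pow_Suc2[symmetric] Suc_diff_le)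
      finally show "x \<otimes> ([(n choose i)] \<cdot> (x [^] i \<otimes> y [^] (n - i))) = [(n choose i)] \<cdot> T (Suc i)" .
    qed
    finally show ?thesis .
  qed
  have S2: "y \<otimes> lsum (\<lambda>k. [(n choose k)] \<cdot> (x [^] k \<otimes> y [^] (n - k))) (Suc n)
      = lsum (\<lambda>k. [(n choose k)] \<cdot> T k) (Suc n)"
  proof -
    have "y \<otimes> lsum (\<lambda>k. [(n choose k)] \<cdot> (x [^] k \<otimes> y [^] (n - k))) (Suc n)
       = lsum (\<lambda>k. y \<otimes> ([(n choose k)] \<cdot> (x [^] k \<otimes> y [^] (n - k)))) (Suc n)"
      using x y by (intro lsum_ldistr) auto
    also have "\<dots> = lsum (\<lambda>k. [(n choose k)] \<cdot> T k) (Suc n)"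
    proof (rule lsum_cong)
      fix i assume i: "i < Suc n"
      have "y \<otimes> ([(n choose i)] \<cdot> (x [^] i \<otimes> y [^] (n - i))) = [(n choose i)] \<cdot> (y \<otimes> (x [^] i \<otimes> y [^] (n - i)))"
        using x y add_pow_rdistr by simp
      also have "y \<otimes> (x [^] i \<otimes> y [^] (n - i)) = T i"
      proof -
        have "y \<otimes> (x [^] i \<otimes> y [^] (n - i)) = x [^] i \<otimes> (y [^] (n - i) \<otimes> y)"
          using x y by (simp add: m_ac)
        then show ?thesis using x y i by (simp add: T_def Suc_diff_le)
      qed
      finally show "y \<otimes> ([(n choose i)] \<cdot> (x [^] i \<otimes> y [^] (n - i))) = [(n choose i)] \<cdot> T i" .
    qed
    finally show ?thesis .
  qed
  have "(x \<oplus> y) [^] Suc n = (x \<oplus> y) \<otimes> (x \<oplus> y) [^] n"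
    using x y by (simp add: m_comm)
  also have "\<dots> = x \<otimes> (x \<oplus> y) [^] n \<oplus> y \<otimes> (x \<oplus> y) [^] n"
    using x y by (simp add: l_distr)
  also have "\<dots> = lsum (\<lambda>k. [(n choose k)] \<cdot> T (Suc k)) (Suc n) \<oplus> lsum (\<lambda>k. [(n choose k)] \<cdot> T k) (Suc n)"
    using S1 S2 IH by simp
  also have "lsum (\<lambda>k. [(n choose k)] \<cdot> T k) (Suc n) = lsum (\<lambda>k. [(n choose k)] \<cdot> T k) (Suc (Suc n))"
    using Tc lsum_closed[of "Suc n" "\<lambda>k. [(n choose k)] \<cdot> T k"] by (simp add: binomial_eq_0)
  also have "\<dots> = [(n choose 0)] \<cdot> T 0 \<oplus> lsum (\<lambda>k. [(n choose Suc k)] \<cdot> T (Suc k)) (Suc n)"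
    using Tc by (intro lsum_shift) auto
  finally have A: "(x \<oplus> y) [^] Suc n = lsum (\<lambda>k. [(n choose k)] \<cdot> T (Suc k)) (Suc n) \<oplus>
      ([(n choose 0)] \<cdot> T 0 \<oplus> lsum (\<lambda>k. [(n choose Suc k)] \<cdot> T (Suc k)) (Suc n))" .
  have B: "lsum (\<lambda>k. [(Suc n choose k)] \<cdot> T k) (Suc (Suc n)) =
     [(Suc n choose 0)] \<cdot> T 0 \<oplus> lsum (\<lambda>k. [(Suc n choose Suc k)] \<cdot> T (Suc k)) (Suc n)"
    using Tc by (intro lsum_shift) auto
  have C: "lsum (\<lambda>k. [(Suc n choose Suc k)] \<cdot> T (Suc k)) (Suc n) =
     lsum (\<lambda>k. [(n choose k)] \<cdot> T (Suc k)) (Suc n) \<oplus> lsum (\<lambda>k. [(n choose Suc k)] \<cdot> T (Suc k)) (Suc n)"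
  proof -
    have "lsum (\<lambda>k. [(Suc n choose Suc k)] \<cdot> T (Suc k)) (Suc n) =
       lsum (\<lambda>k. [(n choose k)] \<cdot> T (Suc k) \<oplus> [(n choose Suc k)] \<cdot> T (Suc k)) (Suc n)"
      using Tc by (intro lsum_cong) (simp add: add.nat_pow_mult)
    also have "\<dots> = lsum (\<lambda>k. [(n choose k)] \<cdot> T (Suc k)) (Suc n) \<oplus> lsum (\<lambda>k. [(n choose Suc k)] \<cdot> T (Suc k)) (Suc n)"
      using Tc by (intro lsum_add) auto
    finally show ?thesis .
  qed
  have D: "lsum (\<lambda>k. [(n choose k)] \<cdot> T (Suc k)) (Suc n) \<in> carrier R"
    "lsum (\<lambda>k. [(n choose Suc k)] \<cdot> T (Suc k)) (Suc n) \<in> carrier R" "[(n choose 0)] \<cdot> T 0 \<in> carrier R"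
    using Tc by (auto intro: lsum_closed)
  have "(x \<oplus> y) [^] Suc n = lsum (\<lambda>k. [(Suc n choose k)] \<cdot> T k) (Suc (Suc n))"
    unfolding A B C using D by (simp add: a_ac)
  then show ?case by (simp add: T_def)
qed


lemma add_pow_zero_char:
  assumes p: "[(p::nat)] \<cdot> \<one> = \<zero>" and t: "t \<in> carrier R"
  shows "[(p * m)] \<cdot> t = \<zero>"
proof -
  have "[p] \<cdot> t = [p] \<cdot> (\<one> \<otimes> t)" using t by simp
  also have "\<dots> = ([p] \<cdot> \<one>) \<otimes> t" using t add_pow_ldistr[of \<one> t p] by simp
  also have "\<dots> = \<zero>" using p t by simp
  finally have "[p] \<cdot> t = \<zero>" .
  then have "[m] \<cdot> ([p] \<cdot> t) = \<zero>" by simp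
  then show ?thesis using t add.nat_pow_pow[of t m p] by simp
qed

lemma frobenius:
  assumes pr: "Factorial_Ring.prime (p::nat)" and p: "[p] \<cdot> \<one> = \<zero>" and x: "x \<in> carrier R" and y: "y \<in> carrier R"
  shows "(x \<oplus> y) [^] p = x [^] p \<oplus> y [^] p"
proof -
  define f where "f = (\<lambda>k. [(p choose k)] \<cdot> (x [^] k \<otimes> y [^] (p - k)))"
  have fc: "f k \<in> carrier R" for k using x y by (simp add: f_def)
  have p1: "p \<ge> 1" using pr prime_ge_1_nat by blast
  obtain r where r: "p = Suc r" using p1 by (cases p) auto
  have mid: "f (Suc i) = \<zero>" if "i < r" for i
  proof -
    have "p dvd (p choose Suc i)" using that r pr by (intro dvd_choose_prime) auto
    then obtain m where "p choose Suc i = p * m" by (auto elim: dvdE)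
    then show ?thesis unfolding f_def using add_pow_zero_char[OF p] x y by simp
  qed
  have "(x \<oplus> y) [^] p = lsum f (Suc p)" unfolding f_def by (rule binomial_ring[OF x y])
  also have "\<dots> = lsum f p \<oplus> f p" by simp
  also have "lsum f p = f 0 \<oplus> lsum (\<lambda>i. f (Suc i)) r" unfolding r using fc by (intro lsum_shift) auto
  also have "lsum (\<lambda>i. f (Suc i)) r = \<zero>" using mid by (intro lsum_zero) auto
  also have "f 0 = y [^] p" using y by (simp add: f_def)
  also have "f p = x [^] p" using x by (simp add: f_def)
  finally show ?thesis using x y by (simp add: a_comm)
qed

lemma frobenius_pow:
  assumes pr: "Factorial_Ring.prime (p::nat)" and p: "[p] \<cdot> \<one> = \<zero>" and x: "x \<in> carrier R" and y: "y \<in> carrier R"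
  shows "(x \<oplus> y) [^] (p ^ n) = x [^] (p ^ n) \<oplus> y [^] (p ^ n)"
proof (induction n)
  case (Suc n)
  have "(x \<oplus> y) [^] (p ^ Suc n) = ((x \<oplus> y) [^] (p ^ n)) [^] p"
    using x y by (simp add: nat_pow_pow mult.commute)
  also have "\<dots> = (x [^] (p ^ n)) [^] p \<oplus> (y [^] (p ^ n)) [^] p"
    using Suc x y by (simp add: frobenius[OF pr p])
  also have "\<dots> = x [^] (p ^ Suc n) \<oplus> y [^] (p ^ Suc n)"
    using x y by (simp add: nat_pow_pow mult.commute)
  finally show ?case .
qed (use x y in simp)

lemma frobenius_neg:
  assumes pr: "Factorial_Ring.prime (p::nat)" and p: "[p] \<cdot> \<one> = \<zero>" and x: "x \<in> carrier R"
  shows "(\<ominus> x) [^] (p ^ n) = \<ominus> (x [^] (p ^ n))"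
proof -
  have "(\<ominus> x) [^] (p ^ n) \<oplus> x [^] (p ^ n) = (\<ominus> x \<oplus> x) [^] (p ^ n)"
    using frobenius_pow[OF pr p, of "\<ominus> x" x n] x by simp
  also have "\<dots> = \<zero>" using x pr by (simp add: l_neg nat_pow_zero prime_gt_0_nat)
  finally show ?thesis using x by (metis add.inv_closed a_minus_def minus_equality minus_minus nat_pow_closed r_neg1 add.m_comm)
qed

end

locale ff_setup = field R for R (structure) + fixes K and p :: nat
  assumes K: "subfield K R" and pr: "Factorial_Ring.prime p" and char: "[p] \<cdot> \<one> = \<zero>"
    and split: "\<And>P. P \<in> carrier (K[X]) \<Longrightarrow> splitted P"
begin

lemma K_facts: "\<one> \<in> K" "\<zero> \<in> K" "\<ominus> \<one> \<in> K" "K \<subseteq> carrier R"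
proof -
  have sr: "subring K R" using subfieldE(1)[OF K] .
  show "\<one> \<in> K" "\<zero> \<in> K" "K \<subseteq> carrier R" using subringE[OF sr] by auto
  show "\<ominus> \<one> \<in> K" using subringE(5)[OF sr subringE(3)[OF sr]] .
qed

lemma eval_cons: "length l = m \<Longrightarrow>
   eval (a # l) x = a \<otimes> x [^] m \<oplus> eval l x"
  by simp

definition bpoly :: "nat \<Rightarrow> 'a \<Rightarrow> 'a \<Rightarrow> 'a list" where
  "bpoly N b c = \<one> # replicate (N - 2) \<zero> @ [b, c]"

lemma bpoly_props:
  assumes N: "N \<ge> 2" and b: "b \<in> K" and c: "c \<in> K"
  shows "bpoly N b c \<in> carrier (K[X])" "bpoly N b c \<in> carrier (poly_ring R)" "degree (bpoly N b c) = N"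
    and "\<And>x. x \<in> carrier R \<Longrightarrow> eval (bpoly N b c) x = x [^] N \<oplus> b \<otimes> x \<oplus> c"
proof -
  have bc: "b \<in> carrier R" "c \<in> carrier R" using b c K_facts by auto
  have pk: "polynomial K (bpoly N b c)" unfolding bpoly_def using K_facts b c
    by (intro polynomialI) auto
  then show "bpoly N b c \<in> carrier (K[X])" by (simp add: univ_poly_carrier)
  have "polynomial (carrier R) (bpoly N b c)" unfolding bpoly_def using K_facts bc
    by (intro polynomialI) auto
  then show "bpoly N b c \<in> carrier (poly_ring R)" by (simp add: univ_poly_carrier)
  show "degree (bpoly N b c) = N" using N by (simp add: bpoly_def)
  fix x assume x: "x \<in> carrier R"
  have "eval (bpoly N b c) x = \<one> \<otimes> x [^] N \<oplus> eval (replicate (N - 2) \<zero> @ [b, c]) x"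
    unfolding bpoly_def using N bc x by (subst eval_cons[where m=N]) auto
  also have "eval (replicate (N - 2) \<zero> @ [b, c]) x = eval [b, c] x"
    using bc x by (intro eval_replicate) auto
  also have "eval [b, c] x = b \<otimes> x \<oplus> c" using bc x by simp
  finally show "eval (bpoly N b c) x = x [^] N \<oplus> b \<otimes> x \<oplus> c" using x bc by (simp add: a_assoc)
qed

lemma splitted_has_root:
  assumes "P \<in> carrier (K[X])" "P \<in> carrier (poly_ring R)" "degree P \<ge> 1"
  shows "\<exists>x. is_root P x"
proof -
  have "size (roots P) = degree P" using split[OF assms(1)] by (simp add: splitted_def)
  then have "roots P \<noteq> {#}" using assms(3) by auto
  then obtain x where "x \<in># roots P" by blast
  then show ?thesis using roots_mem_iff_is_root[OF assms(2)] by blast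
qed

lemma infinite_carrier: "infinite (carrier R)"
proof
  assume fin: "finite (carrier R)"
  define N where "N = card (carrier R)"
  have "{\<zero>, \<one>} \<subseteq> carrier R" by auto
  then have "card {\<zero>, \<one>} \<le> N" unfolding N_def using fin card_mono by blast
  then have N2: "N \<ge> 2" by simp
  have pw: "x [^] N = x" if x: "x \<in> carrier R" for x
  proof (cases "x = \<zero>")
    case True then show ?thesis using N2 by (simp add: nat_pow_zero)
  next
    case False
    have "x \<in> carrier (Multiplicative_Group.mult_of R)" using x False by simp
    then have "x [^]\<^bsub>Multiplicative_Group.mult_of R\<^esub> order (Multiplicative_Group.mult_of R) = \<one>\<^bsub>Multiplicative_Group.mult_of R\<^esub>"
      using group.pow_order_eq_1[OF field_mult_group] by blast
    then have "x [^] (N - 1) = \<one>" using order_mult_of[OF fin] unfolding N_def order_def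
      by (simp add: Multiplicative_Group.nat_pow_mult_of)
    then have "x [^] (N - 1) \<otimes> x = x" using x by simp
    then show ?thesis using N2 x by (metis Suc_diff_1 nat_pow_Suc not_numeral_le_zero zero_less_iff_neq_zero)
  qed
  define Q where "Q = bpoly N (\<ominus> \<one>) \<one>"
  note Qp = bpoly_props[OF N2 K_facts(3) K_facts(1), folded Q_def]
  obtain x where "is_root Q x" using splitted_has_root[OF Qp(1,2)] Qp(3) N2 by auto
  then have x: "x \<in> carrier R" "eval Q x = \<zero>" by (auto simp: is_root_def)
  have "eval Q x = \<one>" using Qp(4)[OF x(1)] pw[OF x(1)] x(1) by (simp add: l_minus r_neg)
  then show False using x by simp
qed


lemma ev_hom: "x \<in> carrier R \<Longrightarrow> ring_hom_cring (poly_ring R) R (\<lambda>P. eval P x)"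
  by (rule eval_cring_hom[OF carrier_is_subring])

lemma alg_mult_le1:
  assumes n: "n \<ge> 1" and q: "q = p ^ n"
  shows "alg_mult (bpoly q (\<ominus> \<one>) \<zero>) a \<le> 1"
proof (rule ccontr)
  define P where "P = bpoly q (\<ominus> \<one>) \<zero>"
  assume "\<not> alg_mult (bpoly q (\<ominus> \<one>) \<zero>) a \<le> 1"
  then have am: "alg_mult P a \<ge> 2" unfolding P_def by simp
  have p2: "p \<ge> 2" using pr by (simp add: prime_ge_2_nat)
  have "p ^ 1 \<le> p ^ n" using n p2 by (intro power_increasing) auto
  then have q2: "q \<ge> 2" using p2 q by simp
  note Pp = bpoly_props[OF q2 K_facts(3) K_facts(2), folded P_def]
  have a: "a \<in> carrier R" using am unfolding alg_mult_def by (auto split: if_splits)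
  have evP: "eval P x = x [^] q \<ominus> x" if "x \<in> carrier R" for x
    using Pp(4)[OF that] that by (simp add: a_minus_def l_minus)
  define PR where "PR = poly_ring R"
  interpret PR: cring PR unfolding PR_def by (rule univ_poly_is_cring[OF carrier_is_subring])
  define D where "D = [\<one>, \<ominus> a]"
  have Dc: "D \<in> carrier PR" unfolding D_def PR_def univ_poly_carrier[symmetric] using a
    by (intro polynomialI) auto
  have evD: "eval D x = x \<ominus> a" if "x \<in> carrier R" for x
    using that a by (simp add: D_def a_minus_def a_comm)
  have "(D [^]\<^bsub>PR\<^esub> (2::nat)) pdivides P"
    using le_alg_mult_imp_pdivides[OF a Pp(2) am] unfolding D_def PR_def by simp
  then obtain H where Hc: "H \<in> carrier PR" and PH: "P = D [^]\<^bsub>PR\<^esub> (2::nat) \<otimes>\<^bsub>PR\<^esub> H"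
    unfolding pdivides_def PR_def by (auto elim!: dividesE)
  have aq: "a [^] q = a" proof -
    have "alg_mult P a > 0" using am by simp
    then have "is_root P a" using alg_mult_gt_zero_iff_is_root[OF Pp(2)] by simp
    then have "eval P a = \<zero>" by (simp add: is_root_def)
    then show ?thesis using evP[OF a] a by (metis nat_pow_closed r_right_minus_eq)
  qed
  define M where "M = D [^]\<^bsub>PR\<^esub> (q - 1) \<ominus>\<^bsub>PR\<^esub> \<one>\<^bsub>PR\<^esub> \<ominus>\<^bsub>PR\<^esub> D \<otimes>\<^bsub>PR\<^esub> H"
  have Mc: "M \<in> carrier PR" unfolding M_def using Dc Hc by simp
  have evM: "eval M x = (x \<ominus> a) [^] (q - 1) \<ominus> \<one> \<ominus> (x \<ominus> a) \<otimes> eval H x" if x: "x \<in> carrier R" for x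
  proof -
    interpret h: ring_hom_cring PR R "\<lambda>P. eval P x" unfolding PR_def by (rule ev_hom[OF x])
    show ?thesis unfolding M_def using Dc Hc x
      by (simp add: h.hom_sub h.hom_mult h.ring.hom_nat_pow evD)
  qed
  have evP2: "x [^] q \<ominus> x = (x \<ominus> a) [^] (2::nat) \<otimes> eval H x" if x: "x \<in> carrier R" for x
  proof -
    interpret h: ring_hom_cring PR R "\<lambda>P. eval P x" unfolding PR_def by (rule ev_hom[OF x])
    have "eval P x = (x \<ominus> a) [^] (2::nat) \<otimes> eval H x"
      unfolding PH using Dc Hc x by (simp add: h.hom_mult h.ring.hom_nat_pow evD)
    then show ?thesis using evP[OF x] by simp
  qed
  have Hx: "eval H x \<in> carrier R" if "x \<in> carrier R" for x
    using Hc that unfolding PR_def univ_poly_carrier[symmetric]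
    by (intro eval_poly_in_carrier) (auto intro: carrier_is_subring)
  have roots: "eval M x = \<zero>" if x: "x \<in> carrier R" and xa: "x \<noteq> a" for x
  proof -
    define d where "d = x \<ominus> a"
    have dc: "d \<in> carrier R" using x a by (simp add: d_def)
    have d0: "d \<noteq> \<zero>" using x a xa by (simp add: d_def r_right_minus_eq)
    have dq: "d [^] q = x [^] q \<ominus> a"
    proof -
      have "d [^] q = x [^] q \<oplus> (\<ominus> a) [^] q" unfolding d_def q a_minus_def
        using frobenius_pow[OF pr char x] a by simp
      also have "(\<ominus> a) [^] q = \<ominus> (a [^] q)" unfolding q using frobenius_neg[OF pr char a] .
      finally show ?thesis using aq by (simp add: a_minus_def)
    qed
    have dq1: "d [^] q = d \<otimes> d [^] (q - 1)" using dc q2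
      by (metis Suc_diff_1 less_le_trans nat_pow_Suc2 pos2)
    define h where "h = eval H x"
    have hc: "h \<in> carrier R" using Hx[OF x] by (simp add: h_def)
    have e1: "x [^] q \<ominus> x = d [^] (2::nat) \<otimes> h" using evP2[OF x] by (simp add: d_def h_def)
    have "d \<otimes> eval M x = d \<otimes> (d [^] (q - 1) \<ominus> \<one> \<ominus> d \<otimes> h)"
      using evM[OF x] by (simp add: d_def h_def)
    also have "\<dots> = d \<otimes> d [^] (q - 1) \<ominus> d \<ominus> d \<otimes> d \<otimes> h"
    proof -
      have "\<And>e. e \<in> carrier R \<Longrightarrow> d \<otimes> (e \<ominus> \<one> \<ominus> d \<otimes> h) = d \<otimes> e \<ominus> d \<ominus> d \<otimes> d \<otimes> h"
        using dc hc by algebra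
      then show ?thesis using dc by simp
    qed
    also have "\<dots> = d [^] q \<ominus> d \<ominus> d [^] (2::nat) \<otimes> h"
      using dc hc dq1 by (simp add: numeral_2_eq_2)
    also have "\<dots> = (x [^] q \<ominus> a) \<ominus> (x \<ominus> a) \<ominus> (x [^] q \<ominus> x)"
      using dq e1 by (simp add: d_def)
    also have "\<dots> = \<zero>"
    proof -
      have "\<And>e. e \<in> carrier R \<Longrightarrow> (e \<ominus> a) \<ominus> (x \<ominus> a) \<ominus> (e \<ominus> x) = \<zero>"
        using x a by algebra
      then show ?thesis using x by simp
    qed
    finally have "d \<otimes> eval M x = \<zero>" .
    moreover have "eval M x \<in> carrier R" using evM[OF x] Hx[OF x] x a by simp
    ultimately show ?thesis using integral[OF _ dc] d0 by blast
  qed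
  have "eval M a = \<ominus> \<one>"
  proof -
    have "a \<ominus> a = \<zero>" using a by (simp add: r_right_minus_eq)
    moreover have "q - 1 \<noteq> 0" using q2 by simp
    ultimately show ?thesis using evM[OF a] a Hx[OF a] by (simp add: nat_pow_zero a_minus_def)
  qed
  then have Mne: "M \<noteq> []" by (metis a_inv_closed add.inv_eq_1_iff one_closed one_not_zero eval.simps(1))
  have "carrier R \<subseteq> insert a {x. is_root M x}"
    using roots Mne by (auto simp: is_root_def)
  moreover have "finite {x. is_root M x}" using finite_number_of_roots Mc unfolding PR_def by blast
  ultimately show False using infinite_carrier finite_subset by blast
qed


lemma card_S:
  assumes n: "n \<ge> 1" and q: "q = p ^ n"
  shows "card {x \<in> carrier R. x [^] q = x} = q" "finite {x \<in> carrier R. x [^] q = x}"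
proof -
  define P where "P = bpoly q (\<ominus> \<one>) \<zero>"
  have p2: "p \<ge> 2" using pr by (simp add: prime_ge_2_nat)
  have "p ^ 1 \<le> p ^ n" using n p2 by (intro power_increasing) auto
  then have q2: "q \<ge> 2" using p2 q by simp
  note Pp = bpoly_props[OF q2 K_facts(3) K_facts(2), folded P_def]
  have evP: "eval P x = x [^] q \<ominus> x" if "x \<in> carrier R" for x
    using Pp(4)[OF that] that by (simp add: a_minus_def l_minus)
  define S where "S = {x \<in> carrier R. x [^] q = x}"
  have rootS: "is_root P x \<longleftrightarrow> x \<in> S" for x
  proof -
    have "P \<noteq> []" by (simp add: P_def bpoly_def)
    then show ?thesis unfolding is_root_def S_def using evP
      by (metis (mono_tags, lifting) mem_Collect_eq nat_pow_closed r_right_minus_eq)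
  qed
  have finS: "finite S" using finite_number_of_roots[OF Pp(2)] rootS by simp
  have "roots P = mset_set S"
  proof (rule multiset_eqI)
    fix a
    have "count (roots P) a = alg_mult P a" using alg_mult_eq_count_roots[OF Pp(2)] by simp
    moreover have "alg_mult P a \<le> 1" unfolding P_def by (rule alg_mult_le1[OF n q])
    moreover have "alg_mult P a > 0 \<longleftrightarrow> a \<in> S" using alg_mult_gt_zero_iff_is_root[OF Pp(2)] rootS by simp
    ultimately show "count (roots P) a = count (mset_set S) a" using finS
      by (cases "a \<in> S") auto
  qed
  then have "card S = size (roots P)" by simp
  also have "\<dots> = q" using split[OF Pp(1)] Pp(3) by (simp add: splitted_def)
  finally show "card {x \<in> carrier R. x [^] q = x} = q" "finite {x \<in> carrier R. x [^] q = x}"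
    using finS by (simp_all add: S_def)
qed

end

lemma (in ring_hom_ring) hom_add_pow_nat: "x \<in> carrier R \<Longrightarrow> h ([(k::nat)] \<cdot>\<^bsub>R\<^esub> x) = [k] \<cdot>\<^bsub>S\<^esub> h x"
  by (induction k) (auto simp: R.add.nat_pow_Suc S.add.nat_pow_Suc)

lemma exists_ff:
  assumes pr: "Factorial_Ring.prime (p::nat)"
  shows "\<exists>(L :: ((int list \<times> nat) multiset \<Rightarrow> int) ring) K. ff_setup L K p"
proof -
  define Rp where "Rp = residue_ring (int p)"
  interpret Rp: residues_prime p Rp
    using pr unfolding Rp_def by (unfold_locales) auto
  obtain L :: "((int list \<times> nat) multiset \<Rightarrow> int) ring"
    where cl: "algebraic_closure L ((ring.indexed_const Rp) ` (carrier Rp))"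
      and hom: "(ring.indexed_const Rp) \<in> ring_hom Rp L"
    using field.exists_closure[OF Rp.is_field] by blast
  interpret L: algebraic_closure L "(ring.indexed_const Rp) ` (carrier Rp)" by (rule cl)
  interpret h: ring_hom_ring Rp L "ring.indexed_const Rp"
    using hom by (intro ring_hom_ringI2) (auto simp: Rp.ring_axioms L.ring_axioms)
  have resp: "[k] \<cdot>\<^bsub>Rp\<^esub> \<one>\<^bsub>Rp\<^esub> = int k mod int p" for k :: nat
  proof (induction k)
    case 0 then show ?case by (simp add: Rp.res_zero_eq)
  next
    case (Suc k) then show ?case
      by (simp add: Rp.add.nat_pow_Suc Rp.res_add_eq Rp.res_one_eq mod_add_right_eq add.commute)
  qed
  have "[p] \<cdot>\<^bsub>L\<^esub> \<one>\<^bsub>L\<^esub> = (ring.indexed_const Rp) ([p] \<cdot>\<^bsub>Rp\<^esub> \<one>\<^bsub>Rp\<^esub>)"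
    by (simp add: h.hom_add_pow_nat)
  also have "\<dots> = \<zero>\<^bsub>L\<^esub>" using resp[of p] by (simp add: Rp.res_zero_eq[symmetric])
  finally have char: "[p] \<cdot>\<^bsub>L\<^esub> \<one>\<^bsub>L\<^esub> = \<zero>\<^bsub>L\<^esub>" .
  have "ff_setup L ((ring.indexed_const Rp) ` (carrier Rp)) p"
    apply unfold_locales
    using L.subfield_axioms pr char L.roots_over_subfield by auto
  then show ?thesis by blast
qed


context ff_setup begin

lemma S_struct:
  assumes n: "n \<ge> 1" and q: "q = p ^ n"
  shows "\<exists>g::nat\<Rightarrow>nat\<Rightarrow>nat\<Rightarrow>nat. (\<forall>m x b. m<q \<longrightarrow> x<q \<longrightarrow> b<q \<longrightarrow> g m x b < q) \<and>
     (\<forall>m x y. m<q \<longrightarrow> x<q \<longrightarrow> y<q \<longrightarrow> (\<exists>!b. b<q \<and> g m x b = y)) \<and>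
     (\<forall>m m' b b'. m<q \<longrightarrow> m'<q \<longrightarrow> m\<noteq>m' \<longrightarrow> b<q \<longrightarrow> b'<q \<longrightarrow> (\<exists>!x. x<q \<and> g m x b = g m' x b'))"
proof -
  define S where "S = {x \<in> carrier R. x [^] q = x}"
  have cS: "card S = q" and fS: "finite S" using card_S[OF n q] by (simp_all add: S_def)
  have Sc: "S \<subseteq> carrier R" by (auto simp: S_def)
  have addS: "x \<oplus> y \<in> S" if "x \<in> S" "y \<in> S" for x y
    using that frobenius_pow[OF pr char, of x y n] by (simp add: S_def q)
  have mulS: "x \<otimes> y \<in> S" if "x \<in> S" "y \<in> S" for x y
    using that by (simp add: S_def nat_pow_distrib)
  have negS: "\<ominus> x \<in> S" if "x \<in> S" for x
    using that frobenius_neg[OF pr char, of x n] by (simp add: S_def q)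
  obtain \<beta> where bij: "bij_betw \<beta> {0..<q} S" using ex_bij_betw_nat_finite[OF fS] cS by auto
  define \<gamma> where "\<gamma> = inv_into {0..<q} \<beta>"
  have bS: "\<beta> i \<in> S" if "i < q" for i using bij that by (auto simp: bij_betw_def)
  have gb: "\<gamma> (\<beta> i) = i" if "i < q" for i using bij that by (simp add: \<gamma>_def bij_betw_inv_into_left)
  have bg: "\<beta> (\<gamma> y) = y" if "y \<in> S" for y using bij that by (simp add: \<gamma>_def bij_betw_inv_into_right)
  have gS: "\<gamma> y < q" if "y \<in> S" for y using bij that
    by (metis atLeastLessThan_iff bij_betw_def gb imageE)
  have binj: "\<beta> i = \<beta> j \<longleftrightarrow> i = j" if "i < q" "j < q" for i j using gb that by metis
  define g where "g = (\<lambda>m x b. \<gamma> (\<beta> m \<otimes> \<beta> x \<oplus> \<beta> b))"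
  have geq: "g m x b = y \<longleftrightarrow> \<beta> m \<otimes> \<beta> x \<oplus> \<beta> b = \<beta> y" if "m<q" "x<q" "b<q" "y<q" for m x b y
    using that bS gb bg addS mulS unfolding g_def by metis
  have A1: "g m x b < q" if "m<q" "x<q" "b<q" for m x b
    unfolding g_def using that bS addS mulS gS by simp
  have A2: "\<exists>!b. b<q \<and> g m x b = y" if "m<q" "x<q" "y<q" for m x y
  proof -
    define b where "b = \<gamma> (\<beta> y \<ominus> \<beta> m \<otimes> \<beta> x)"
    have inS: "\<beta> y \<ominus> \<beta> m \<otimes> \<beta> x \<in> S" unfolding a_minus_def using that bS addS mulS negS by simp
    have bq: "b < q" unfolding b_def using gS inS .
    have c: "\<beta> m \<in> carrier R" "\<beta> x \<in> carrier R" "\<beta> y \<in> carrier R" using that bS Sc by auto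
    have "\<beta> m \<otimes> \<beta> x \<oplus> \<beta> b = \<beta> y" unfolding b_def bg[OF inS] using c by algebra
    then have ex: "g m x b = y" using geq that bq by simp
    have un: "b' = b" if "b' < q" "g m x b' = y" for b'
    proof -
      have "\<beta> m \<otimes> \<beta> x \<oplus> \<beta> b' = \<beta> m \<otimes> \<beta> x \<oplus> \<beta> b"
        using geq[of m x b' y] geq[of m x b y] \<open>m<q\<close> \<open>x<q\<close> \<open>y<q\<close> that ex bq by simp
      then have "\<beta> b' = \<beta> b" using c bS bq that Sc by (meson add.l_cancel m_closed subsetD)
      then show ?thesis using binj that bq by simp
    qed
    show ?thesis using ex un bq by blast
  qed
  have A3: "\<exists>!x. x<q \<and> g m x b = g m' x b'" if "m<q" "m'<q" "m\<noteq>m'" "b<q" "b'<q" for m m' b b'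
  proof -
    define d where "d = \<beta> m \<ominus> \<beta> m'"
    have dS: "d \<in> S" unfolding d_def a_minus_def using that bS addS negS by simp
    have d0: "d \<noteq> \<zero>" unfolding d_def using that binj bS Sc
      by (metis r_right_minus_eq subsetD)
    have dc: "d \<in> carrier R" using dS Sc by auto
    have key: "g m x b = g m' x b' \<longleftrightarrow> d \<otimes> \<beta> x = \<beta> b' \<ominus> \<beta> b" if "x < q" for x
    proof -
      have c: "\<beta> m \<in> carrier R" "\<beta> x \<in> carrier R" "\<beta> m' \<in> carrier R" "\<beta> b \<in> carrier R" "\<beta> b' \<in> carrier R"
        using that \<open>m<q\<close> \<open>m'<q\<close> \<open>b<q\<close> \<open>b'<q\<close> bS Sc by auto
      have "g m x b = g m' x b' \<longleftrightarrow> \<beta> m \<otimes> \<beta> x \<oplus> \<beta> b = \<beta> m' \<otimes> \<beta> x \<oplus> \<beta> b'"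
        using that \<open>m<q\<close> \<open>m'<q\<close> \<open>b<q\<close> \<open>b'<q\<close> bS addS mulS gb bg unfolding g_def by metis
      also have "\<dots> \<longleftrightarrow> d \<otimes> \<beta> x = \<beta> b' \<ominus> \<beta> b"
      proof
        assume "\<beta> m \<otimes> \<beta> x \<oplus> \<beta> b = \<beta> m' \<otimes> \<beta> x \<oplus> \<beta> b'"
        then have "\<beta> m \<otimes> \<beta> x \<oplus> \<beta> b \<ominus> (\<beta> m' \<otimes> \<beta> x \<oplus> \<beta> b) = \<beta> m' \<otimes> \<beta> x \<oplus> \<beta> b' \<ominus> (\<beta> m' \<otimes> \<beta> x \<oplus> \<beta> b)" by simp
        moreover have "\<beta> m \<otimes> \<beta> x \<oplus> \<beta> b \<ominus> (\<beta> m' \<otimes> \<beta> x \<oplus> \<beta> b) = d \<otimes> \<beta> x" unfolding d_def using c by algebra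
        moreover have "\<beta> m' \<otimes> \<beta> x \<oplus> \<beta> b' \<ominus> (\<beta> m' \<otimes> \<beta> x \<oplus> \<beta> b) = \<beta> b' \<ominus> \<beta> b" using c by algebra
        ultimately show "d \<otimes> \<beta> x = \<beta> b' \<ominus> \<beta> b" by simp
      next
        assume "d \<otimes> \<beta> x = \<beta> b' \<ominus> \<beta> b"
        then have "\<beta> m' \<otimes> \<beta> x \<oplus> \<beta> b \<oplus> d \<otimes> \<beta> x = \<beta> m' \<otimes> \<beta> x \<oplus> \<beta> b \<oplus> (\<beta> b' \<ominus> \<beta> b)" by simp
        moreover have "\<beta> m' \<otimes> \<beta> x \<oplus> \<beta> b \<oplus> d \<otimes> \<beta> x = \<beta> m \<otimes> \<beta> x \<oplus> \<beta> b" unfolding d_def using c by algebra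
        moreover have "\<beta> m' \<otimes> \<beta> x \<oplus> \<beta> b \<oplus> (\<beta> b' \<ominus> \<beta> b) = \<beta> m' \<otimes> \<beta> x \<oplus> \<beta> b'" using c by algebra
        ultimately show "\<beta> m \<otimes> \<beta> x \<oplus> \<beta> b = \<beta> m' \<otimes> \<beta> x \<oplus> \<beta> b'" by simp
      qed
      finally show ?thesis .
    qed
    have injd: "inj_on (\<lambda>y. d \<otimes> y) S"
      using d0 dc Sc by (intro inj_onI) (metis m_lcancel subsetD)
    have "(\<lambda>y. d \<otimes> y) ` S = S" using endo_inj_surj[OF fS _ injd] dS mulS by auto
    moreover have t: "\<beta> b' \<ominus> \<beta> b \<in> S" unfolding a_minus_def using that bS addS negS by simp
    ultimately obtain y where y: "y \<in> S" "d \<otimes> y = \<beta> b' \<ominus> \<beta> b" by (metis imageE)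
    have ex: "\<gamma> y < q \<and> g m (\<gamma> y) b = g m' (\<gamma> y) b'" using key[of "\<gamma> y"] gS[OF y(1)] bg[OF y(1)] y(2) by simp
    have un: "x = \<gamma> y" if "x < q" "g m x b = g m' x b'" for x
    proof -
      have "d \<otimes> \<beta> x = d \<otimes> y" using key[OF that(1)] that(2) y(2) by simp
      then have "\<beta> x = y" using injd bS[OF that(1)] y(1) by (auto dest: inj_onD)
      then show ?thesis using gb[OF that(1)] by simp
    qed
    show ?thesis using ex un by blast
  qed
  show ?thesis by (rule exI[of _ g]) (use A1 A2 A3 in blast)
qed

end

lemma gf_struct:
  assumes "primepow (q::nat)"
  shows "\<exists>g::nat\<Rightarrow>nat\<Rightarrow>nat\<Rightarrow>nat. (\<forall>m x b. m<q \<longrightarrow> x<q \<longrightarrow> b<q \<longrightarrow> g m x b < q) \<and>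
     (\<forall>m x y. m<q \<longrightarrow> x<q \<longrightarrow> y<q \<longrightarrow> (\<exists>!b. b<q \<and> g m x b = y)) \<and>
     (\<forall>m m' b b'. m<q \<longrightarrow> m'<q \<longrightarrow> m\<noteq>m' \<longrightarrow> b<q \<longrightarrow> b'<q \<longrightarrow> (\<exists>!x. x<q \<and> g m x b = g m' x b'))"
proof -
  obtain p n where pn: "Factorial_Ring.prime p" "n > 0" "q = p ^ n" using assms by (auto simp: primepow_def)
  obtain L :: "((int list \<times> nat) multiset \<Rightarrow> int) ring" and K where "ff_setup L K p"
    using exists_ff[OF pn(1)] by blast
  then show ?thesis using ff_setup.S_struct[of L K p n q] pn by simp
qed

locale biaff =
  fixes q s :: nat and g :: "nat \<Rightarrow> nat \<Rightarrow> nat \<Rightarrow> nat"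
  assumes s2: "2 \<le> s" and sq: "s \<le> q"
    and A1: "\<And>m x b. m<q \<Longrightarrow> x<q \<Longrightarrow> b<q \<Longrightarrow> g m x b < q"
    and A2: "\<And>m x y. m<q \<Longrightarrow> x<q \<Longrightarrow> y<q \<Longrightarrow> \<exists>!b. b<q \<and> g m x b = y"
    and A3: "\<And>m m' b b'. m<q \<Longrightarrow> m'<q \<Longrightarrow> m\<noteq>m' \<Longrightarrow> b<q \<Longrightarrow> b'<q \<Longrightarrow> \<exists>!x. x<q \<and> g m x b = g m' x b'"
begin

definition pt :: "nat \<Rightarrow> nat \<Rightarrow> nat" where "pt x y = x * q + y"
definition ln :: "nat \<Rightarrow> nat \<Rightarrow> nat" where "ln m b = q * q + (m * q + b)"
definition VV :: "nat set" where "VV = {..< q * q + s * q}"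
definition EE :: "nat \<Rightarrow> nat \<Rightarrow> bool" where
  "EE u v \<longleftrightarrow> (\<exists>x y m b. x<q \<and> y<q \<and> m<s \<and> b<q \<and> g m x b = y \<and>
       ((u = pt x y \<and> v = ln m b) \<or> (u = ln m b \<and> v = pt x y)))"

lemma q2: "q \<ge> 2" using s2 sq by simp

lemma lt_qq: "x < q \<Longrightarrow> y < q \<Longrightarrow> x * q + y < q * q"
proof -
  assume "x < q" "y < q"
  then have "x * q + y < x * q + q" by simp
  also have "\<dots> = Suc x * q" by simp
  also have "\<dots> \<le> q * q" using \<open>x < q\<close> by (intro mult_le_mono1) simp
  finally show ?thesis .
qed

lemma pt_V: "x < q \<Longrightarrow> y < q \<Longrightarrow> pt x y < q * q" unfolding pt_def by (rule lt_qq)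

lemma ln_V: "m < s \<Longrightarrow> b < q \<Longrightarrow> ln m b \<in> VV"
proof -
  assume a: "m < s" "b < q"
  have "m * q + b < m * q + q" using a by simp
  also have "\<dots> = Suc m * q" by simp
  also have "\<dots> \<le> s * q" using a by (intro mult_le_mono1) simp
  finally show ?thesis unfolding ln_def VV_def by simp
qed

lemma pt_in_V: "x < q \<Longrightarrow> y < q \<Longrightarrow> pt x y \<in> VV"
  using pt_V unfolding VV_def by fastforce

lemma pt_inj: "x < q \<Longrightarrow> y < q \<Longrightarrow> x' < q \<Longrightarrow> y' < q \<Longrightarrow> pt x y = pt x' y' \<longleftrightarrow> x = x' \<and> y = y'"
proof -
  assume a: "x < q" "y < q" "x' < q" "y' < q"
  have q0: "q > 0" using a by simp
  have d: "(x * q + y) div q = x" "(x * q + y) mod q = y" "(x' * q + y') div q = x'" "(x' * q + y') mod q = y'"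
    using a q0 by simp_all
  show ?thesis unfolding pt_def using d by metis
qed

lemma ln_inj: "m < q \<Longrightarrow> b < q \<Longrightarrow> m' < q \<Longrightarrow> b' < q \<Longrightarrow> ln m b = ln m' b' \<longleftrightarrow> m = m' \<and> b = b'"
  unfolding ln_def using pt_inj unfolding pt_def by simp

lemma pt_ne_ln: "x < q \<Longrightarrow> y < q \<Longrightarrow> pt x y \<noteq> ln m b"
  using pt_V unfolding ln_def by fastforce


lemma VV_cases:
  assumes "v \<in> VV"
  obtains (P) x y where "x < q" "y < q" "v = pt x y" | (L) m b where "m < s" "b < q" "v = ln m b"
proof (cases "v < q * q")
  case True
  have q0: "q > 0" using q2 by simp
  have "v div q < q" using True q0 by (simp add: div_less_iff_less_mult)
  moreover have "v mod q < q" using q0 by simp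
  moreover have "v = pt (v div q) (v mod q)" unfolding pt_def by simp
  ultimately show ?thesis using P by blast
next
  case False
  define w where "w = v - q * q"
  have q0: "q > 0" using q2 by simp
  have "w < s * q" using assms False unfolding VV_def w_def by auto
  then have "w div q < s" using q0 by (simp add: div_less_iff_less_mult)
  moreover have "w mod q < q" using q0 by simp
  moreover have "v = ln (w div q) (w mod q)" unfolding ln_def w_def using False by simp
  ultimately show ?thesis using L by blast
qed

lemma VV_eq: "VV = (\<lambda>(x,y). pt x y) ` ({..<q} \<times> {..<q}) \<union> (\<lambda>(m,b). ln m b) ` ({..<s} \<times> {..<q})"
proof
  show "VV \<subseteq> (\<lambda>(x,y). pt x y) ` ({..<q} \<times> {..<q}) \<union> (\<lambda>(m,b). ln m b) ` ({..<s} \<times> {..<q})"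
  proof
    fix v assume "v \<in> VV"
    then show "v \<in> (\<lambda>(x,y). pt x y) ` ({..<q} \<times> {..<q}) \<union> (\<lambda>(m,b). ln m b) ` ({..<s} \<times> {..<q})"
      by (cases rule: VV_cases) force+
  qed
  show "(\<lambda>(x,y). pt x y) ` ({..<q} \<times> {..<q}) \<union> (\<lambda>(m,b). ln m b) ` ({..<s} \<times> {..<q}) \<subseteq> VV"
    using pt_in_V ln_V by auto
qed

lemma card_VV: "card VV = q * q + s * q" unfolding VV_def by simp

lemma EE_pt_ln: "x < q \<Longrightarrow> y < q \<Longrightarrow> m < s \<Longrightarrow> b < q \<Longrightarrow> EE (pt x y) (ln m b) \<longleftrightarrow> g m x b = y"
  unfolding EE_def using pt_inj ln_inj pt_ne_ln sq by (smt (verit, ccfv_threshold) less_le_trans)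

lemma EE_sym: "EE u v \<Longrightarrow> EE v u" unfolding EE_def by blast

lemma EE_ln_pt: "x < q \<Longrightarrow> y < q \<Longrightarrow> m < s \<Longrightarrow> b < q \<Longrightarrow> EE (ln m b) (pt x y) \<longleftrightarrow> g m x b = y"
  using EE_pt_ln EE_sym by blast

lemma EE_pt_pt: "x < q \<Longrightarrow> y < q \<Longrightarrow> x' < q \<Longrightarrow> y' < q \<Longrightarrow> \<not> EE (pt x y) (pt x' y')"
  unfolding EE_def using pt_ne_ln by metis

lemma EE_ln_ln: "m < s \<Longrightarrow> b < q \<Longrightarrow> m' < s \<Longrightarrow> b' < q \<Longrightarrow> \<not> EE (ln m b) (ln m' b')"
  unfolding EE_def using pt_ne_ln by metis

lemma EE_V: "EE u v \<Longrightarrow> u \<in> VV \<and> v \<in> VV"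
  unfolding EE_def using pt_in_V ln_V by auto

lemma EE_irrefl: "\<not> EE u u"
  unfolding EE_def using pt_ne_ln by metis

lemma simple: "simple_graph VV EE"
  unfolding simple_graph_def using EE_V EE_sym EE_irrefl by (auto simp: VV_def)


definition bof :: "nat \<Rightarrow> nat \<Rightarrow> nat \<Rightarrow> nat" where
  "bof m x y = (THE b. b<q \<and> g m x b = y)"

lemma bof: assumes "m<q" "x<q" "y<q" shows "bof m x y < q" "g m x (bof m x y) = y"
  using theI'[OF A2[OF assms]] unfolding bof_def by auto

lemma bof_unique: assumes "m<q" "x<q" "y<q" "b < q" "g m x b = y" shows "b = bof m x y"
  using A2[OF assms(1-3)] bof[OF assms(1-3)] assms(4,5) by blast

lemma nbr_pt: assumes "x < q" "y < q"
  shows "{v \<in> VV. EE (pt x y) v} = (\<lambda>m. ln m (bof m x y)) ` {..<s}"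
proof
  show "{v \<in> VV. EE (pt x y) v} \<subseteq> (\<lambda>m. ln m (bof m x y)) ` {..<s}"
  proof
    fix v assume v: "v \<in> {v \<in> VV. EE (pt x y) v}"
    then have vV: "v \<in> VV" and e: "EE (pt x y) v" by auto
    from vV show "v \<in> (\<lambda>m. ln m (bof m x y)) ` {..<s}"
    proof (cases rule: VV_cases)
      case (P x' y') then show ?thesis using e EE_pt_pt assms by blast
    next
      case (L m b)
      then have "g m x b = y" using e EE_pt_ln assms by blast
      then have "b = bof m x y" using bof_unique[of m x y b] L assms sq by simp
      then show ?thesis using L by auto
    qed
  qed
  show "(\<lambda>m. ln m (bof m x y)) ` {..<s} \<subseteq> {v \<in> VV. EE (pt x y) v}"
    using assms bof[of _ x y] EE_pt_ln ln_V sq by auto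
qed

lemma deg_pt: assumes "x < q" "y < q" shows "Defs.degree VV EE (pt x y) = s"
proof -
  have "inj_on (\<lambda>m. ln m (bof m x y)) {..<s}"
    using ln_inj bof[of _ x y] assms sq by (intro inj_onI) auto
  then show ?thesis unfolding Defs.degree_def nbr_pt[OF assms] by (simp add: card_image)
qed

lemma nbr_ln: assumes "m < s" "b < q"
  shows "{v \<in> VV. EE (ln m b) v} = (\<lambda>x. pt x (g m x b)) ` {..<q}"
proof
  show "{v \<in> VV. EE (ln m b) v} \<subseteq> (\<lambda>x. pt x (g m x b)) ` {..<q}"
  proof
    fix v assume v: "v \<in> {v \<in> VV. EE (ln m b) v}"
    then have vV: "v \<in> VV" and e: "EE (ln m b) v" by auto
    from vV show "v \<in> (\<lambda>x. pt x (g m x b)) ` {..<q}"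
    proof (cases rule: VV_cases)
      case (P x y)
      then have "g m x b = y" using e EE_ln_pt assms by blast
      then show ?thesis using P by auto
    next
      case (L m' b') then show ?thesis using e EE_ln_ln assms by blast
    qed
  qed
  show "(\<lambda>x. pt x (g m x b)) ` {..<q} \<subseteq> {v \<in> VV. EE (ln m b) v}"
    using assms A1 EE_ln_pt pt_in_V sq by auto
qed

lemma deg_ln: assumes "m < s" "b < q" shows "Defs.degree VV EE (ln m b) = q"
proof -
  have "inj_on (\<lambda>x. pt x (g m x b)) {..<q}"
    using pt_inj A1 assms sq by (intro inj_onI) (meson lessThan_iff less_le_trans)
  then show ?thesis unfolding Defs.degree_def nbr_ln[OF assms] by (simp add: card_image)
qed

lemma deg_bounds: "v \<in> VV \<Longrightarrow> s \<le> Defs.degree VV EE v \<and> Defs.degree VV EE v \<le> q"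
  by (cases rule: VV_cases) (auto simp: deg_pt deg_ln sq)

lemma deg_vals: "v \<in> VV \<Longrightarrow> Defs.degree VV EE v = s \<or> Defs.degree VV EE v = q"
  by (cases rule: VV_cases) (auto simp: deg_pt deg_ln)

lemma no_triangle: "EE u v \<Longrightarrow> EE v w \<Longrightarrow> \<not> EE u w"
proof -
  assume uv: "EE u v" and vw: "EE v w"
  have uV: "u \<in> VV" using EE_V uv by blast
  have vV: "v \<in> VV" using EE_V uv by blast
  have wV: "w \<in> VV" using EE_V vw by blast
  show "\<not> EE u w"
  proof (cases rule: VV_cases[OF uV])
    case (1 x y)
    show ?thesis
    proof (cases rule: VV_cases[OF vV])
      case (1 x' y') then show ?thesis using uv \<open>u = pt x y\<close> \<open>x<q\<close> \<open>y<q\<close> EE_pt_pt by blast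
    next
      case (2 m b)
      show ?thesis
      proof (cases rule: VV_cases[OF wV])
        case (1 x'' y'') then show ?thesis using \<open>u = pt x y\<close> \<open>x<q\<close> \<open>y<q\<close> EE_pt_pt by blast
      next
        case (2 m' b') then show ?thesis using vw \<open>v = ln m b\<close> \<open>m<s\<close> \<open>b<q\<close> EE_ln_ln by blast
      qed
    qed
  next
    case (2 m b)
    show ?thesis
    proof (cases rule: VV_cases[OF vV])
      case (1 x' y')
      show ?thesis
      proof (cases rule: VV_cases[OF wV])
        case (1 x'' y'') then show ?thesis using vw \<open>v = pt x' y'\<close> \<open>x'<q\<close> \<open>y'<q\<close> EE_pt_pt by blast
      next
        case (2 m' b') then show ?thesis using \<open>u = ln m b\<close> \<open>m<s\<close> \<open>b<q\<close> EE_ln_ln by blast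
      qed
    next
      case (2 m' b') then show ?thesis using uv \<open>u = ln m b\<close> \<open>m<s\<close> \<open>b<q\<close> EE_ln_ln by blast
    qed
  qed
qed


lemma lines_meet_once:
  assumes "m < s" "m' < s" "b < q" "b' < q" "(m, b) \<noteq> (m', b')" "x1 < q" "x2 < q"
    and "g m x1 b = g m' x1 b'" "g m x2 b = g m' x2 b'"
  shows "x1 = x2"
proof (cases "m = m'")
  case True
  then have "b \<noteq> b'" using assms by auto
  moreover have "b = bof m x1 (g m x1 b)" "b' = bof m x1 (g m x1 b)"
    using bof_unique assms True sq A1 by (metis less_le_trans)+
  ultimately show ?thesis by simp
next
  case False
  have "m < q" "m' < q" using assms sq by auto
  then have "\<exists>!x. x < q \<and> g m x b = g m' x b'" using A3[of m m' b b'] False assms by blast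
  then show ?thesis using assms by blast
qed

lemma common_nbr:
  assumes uw: "u \<noteq> w" and e: "EE u a" "EE w a" "EE u c" "EE w c"
  shows "a = c"
proof -
  have uV: "u \<in> VV" and wV: "w \<in> VV" and aV: "a \<in> VV" and cV: "c \<in> VV" using e EE_V by blast+
  show ?thesis
  proof (cases rule: VV_cases[OF uV])
    case (1 x y)
    note u = this
    obtain m1 b1 where a: "m1 < s" "b1 < q" "a = ln m1 b1"
      using aV e(1) u EE_pt_pt by (cases rule: VV_cases) blast+
    obtain m2 b2 where c: "m2 < s" "b2 < q" "c = ln m2 b2"
      using cV e(3) u EE_pt_pt by (cases rule: VV_cases) blast+
    obtain x' y' where w: "x' < q" "y' < q" "w = pt x' y'"
      using wV e(2) a EE_ln_ln by (cases rule: VV_cases) blast+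
    have g1: "g m1 x b1 = y" "g m2 x b2 = y" "g m1 x' b1 = y'" "g m2 x' b2 = y'"
      using e u a c w EE_pt_ln by auto
    show ?thesis
    proof (rule ccontr)
      assume "a \<noteq> c"
      then have "(m1, b1) \<noteq> (m2, b2)" using a c by auto
      then have "x = x'" using lines_meet_once[of m1 m2 b1 b2 x x'] a c u w g1 by simp
      then have "y = y'" using g1 by simp
      then show False using uw u w \<open>x = x'\<close> by simp
    qed
  next
    case (2 m b)
    note u = this
    obtain x1 y1 where a: "x1 < q" "y1 < q" "a = pt x1 y1"
      using aV e(1) u EE_ln_ln by (cases rule: VV_cases) blast+
    obtain x2 y2 where c: "x2 < q" "y2 < q" "c = pt x2 y2"
      using cV e(3) u EE_ln_ln by (cases rule: VV_cases) blast+
    obtain m' b' where w: "m' < s" "b' < q" "w = ln m' b'"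
      using wV e(2) a EE_pt_pt by (cases rule: VV_cases) blast+
    have g1: "g m x1 b = y1" "g m x2 b = y2" "g m' x1 b' = y1" "g m' x2 b' = y2"
      using e u a c w EE_ln_pt by auto
    have "(m, b) \<noteq> (m', b')" using uw u w by auto
    then have "x1 = x2" using lines_meet_once[of m m' b b' x1 x2] a c u w g1 by simp
    then show ?thesis using g1 a c by simp
  qed
qed


lemma meet:
  assumes "m < s" "m' < s" "m \<noteq> m'" "b < q" "b' < q"
  shows "\<exists>p. EE (ln m b) p \<and> EE p (ln m' b')"
proof -
  have "m < q" "m' < q" using assms sq by auto
  then obtain x where x: "x < q" "g m x b = g m' x b'" using A3[of m m' b b'] assms by blast
  have y: "g m x b < q" using A1 x \<open>m < q\<close> assms by blast
  show ?thesis using x y assms EE_ln_pt EE_pt_ln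
    by (intro exI[of _ "pt x (g m x b)"]) auto
qed

lemma conn: "connected_graph VV EE"
proof -
  define hub where "hub = ln 0 0"
  have s0: "0 < s" "1 < s" using s2 by auto
  have q0: "0 < q" using q2 by auto
  have sym: "EE\<^sup>*\<^sup>* u v \<Longrightarrow> EE\<^sup>*\<^sup>* v u" for u v
    by (induction rule: rtranclp_induct) (auto intro: converse_rtranclp_into_rtranclp EE_sym)
  have two: "EE u p \<Longrightarrow> EE p v \<Longrightarrow> EE\<^sup>*\<^sup>* u v" for u p v by auto
  have l0: "EE\<^sup>*\<^sup>* (ln 0 b) hub" if "b < q" for b
  proof -
    have "EE\<^sup>*\<^sup>* (ln 0 b) (ln 1 0)" using meet[of 0 1 b 0] s0 q0 that by auto
    moreover have "EE\<^sup>*\<^sup>* (ln 1 0) (ln 0 0)" using meet[of 1 0 0 0] s0 q0 by auto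
    ultimately show ?thesis unfolding hub_def by simp
  qed
  have pt_hub: "EE\<^sup>*\<^sup>* (pt x y) hub" if "x < q" "y < q" for x y
  proof -
    have "EE (pt x y) (ln 0 (bof 0 x y))" using EE_pt_ln bof[of 0 x y] that s0 q0 by auto
    then show ?thesis using l0[of "bof 0 x y"] bof[of 0 x y] that q0
      by (meson converse_rtranclp_into_rtranclp)
  qed
  have all_hub: "EE\<^sup>*\<^sup>* v hub" if "v \<in> VV" for v
    using that
  proof (cases rule: VV_cases)
    case (P x y) then show ?thesis using pt_hub by simp
  next
    case (L m b)
    have "EE (ln m b) (pt 0 (g m 0 b))" using EE_ln_pt L A1[of m 0 b] q0 sq by auto
    moreover have "EE\<^sup>*\<^sup>* (pt 0 (g m 0 b)) hub" using pt_hub A1[of m 0 b] q0 L sq by auto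
    ultimately show ?thesis using L by (meson converse_rtranclp_into_rtranclp)
  qed
  have "hub \<in> VV" using ln_V s0 q0 by (simp add: hub_def)
  then have "VV \<noteq> {}" by auto
  moreover have "\<forall>u\<in>VV. \<forall>v\<in>VV. EE\<^sup>*\<^sup>* u v"
    using all_hub sym by (meson rtranclp_trans)
  ultimately show ?thesis unfolding connected_graph_def by blast
qed

end

lemma gh_len: "length (fst (game_hist sc sr t)) = Suc t \<and> length (snd (game_hist sc sr t)) = Suc t"
  by (induction t) (auto simp: Let_def split: prod.splits)

lemma gh_Suc: "game_hist sc sr (Suc t) =
   (fst (game_hist sc sr t) @ [sc (fst (game_hist sc sr t)) (snd (game_hist sc sr t))],
    snd (game_hist sc sr t) @ [sr (fst (game_hist sc sr t) @ [sc (fst (game_hist sc sr t)) (snd (game_hist sc sr t))]) (snd (game_hist sc sr t))])"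
  by (simp add: Let_def split: prod.splits)

lemma cop_pos_last: "cop_pos sc sr t = last (fst (game_hist sc sr t))"
  using gh_len[of sc sr t] unfolding cop_pos_def by (metis diff_Suc_1 last_conv_nth list.size(3) nat.distinct(1))

lemma rob_pos_last: "rob_pos sc sr t = last (snd (game_hist sc sr t))"
  using gh_len[of sc sr t] unfolding rob_pos_def by (metis diff_Suc_1 last_conv_nth list.size(3) nat.distinct(1))

lemma gh_ne: "fst (game_hist sc sr t) \<noteq> []" "snd (game_hist sc sr t) \<noteq> []"
  using gh_len[of sc sr t] by auto

lemma cop_pos_0: "cop_pos sc sr 0 = sc [] []"
  by (simp add: cop_pos_def Let_def)

lemma rob_pos_0: "rob_pos sc sr 0 = sr [sc [] []] []"
  by (simp add: rob_pos_def Let_def)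

lemma cop_pos_Suc: "cop_pos sc sr (Suc t) = sc (fst (game_hist sc sr t)) (snd (game_hist sc sr t))"
  unfolding cop_pos_last gh_Suc by simp

lemma rob_pos_Suc: "rob_pos sc sr (Suc t) = sr (fst (game_hist sc sr (Suc t))) (snd (game_hist sc sr t))"
proof -
  have f: "fst (game_hist sc sr (Suc t)) = fst (game_hist sc sr t) @ [sc (fst (game_hist sc sr t)) (snd (game_hist sc sr t))]"
    by (simp only: gh_Suc fst_conv)
  have "snd (game_hist sc sr (Suc t)) = snd (game_hist sc sr t) @ [sr (fst (game_hist sc sr t) @ [sc (fst (game_hist sc sr t)) (snd (game_hist sc sr t))]) (snd (game_hist sc sr t))]"
    by (simp only: gh_Suc snd_conv)
  then show ?thesis unfolding rob_pos_last f by simp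
qed

lemma robber_wins:
  assumes V: "V \<noteq> {}"
    and H0: "\<And>c. valid_config V m c \<Longrightarrow> \<exists>v\<in>V. \<forall>i<m. \<not> step_ok E (c i) v"
    and H1: "\<And>c c' r. valid_config V m c \<Longrightarrow> valid_config V m c' \<Longrightarrow> (\<forall>i<m. step_ok E (c i) (c' i)) \<Longrightarrow>
       r \<in> V \<Longrightarrow> (\<forall>i<m. \<not> step_ok E (c i) r) \<Longrightarrow> \<exists>u\<in>V. step_ok E r u \<and> (\<forall>i<m. \<not> step_ok E (c' i) u)"
  shows "\<not> cops_win V E m"
proof
  assume "cops_win V E m"
  then obtain sc where leg: "legal_cop_strategy V E m sc"
    and win: "\<And>sr. legal_robber_strategy V E sr \<Longrightarrow> captured m sc sr"
    unfolding cops_win_def by blast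
  define good where "good = (\<lambda>c v. v \<in> V \<and> (\<forall>i<m. \<not> step_ok E (c i) v))"
  define sr where "sr = (\<lambda>Cs Rs. if Rs = [] then
        (if \<exists>v. good (last Cs) v then SOME v. good (last Cs) v else SOME v. v \<in> V)
      else (if \<exists>u. good (last Cs) u \<and> step_ok E (last Rs) u then SOME u. good (last Cs) u \<and> step_ok E (last Rs) u
            else last Rs))"
  have v0: "(SOME v. v \<in> V) \<in> V" using V by (simp add: some_in_eq)
  have lr: "legal_robber_strategy V E sr"
    unfolding legal_robber_strategy_def
  proof (rule conjI; intro allI impI)
    fix Cs show "sr Cs [] \<in> V"
    proof (cases "\<exists>v. good (last Cs) v")
      case True
      have "good (last Cs) (SOME v. good (last Cs) v)" using someI_ex[OF True] .
      then show ?thesis unfolding sr_def using True by (simp add: good_def)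
    next
      case False then show ?thesis unfolding sr_def using v0 by auto
    qed
  next
    fix Cs Rs assume a: "Rs \<noteq> [] \<and> last Rs \<in> V"
    show "sr Cs Rs \<in> V \<and> step_ok E (last Rs) (sr Cs Rs)"
    proof (cases "\<exists>u. good (last Cs) u \<and> step_ok E (last Rs) u")
      case True
      then have "good (last Cs) (SOME u. good (last Cs) u \<and> step_ok E (last Rs) u) \<and>
                 step_ok E (last Rs) (SOME u. good (last Cs) u \<and> step_ok E (last Rs) u)"
        by (rule someI_ex)
      then show ?thesis unfolding sr_def using a True by (simp add: good_def)
    next
      case False then show ?thesis unfolding sr_def using a by (auto simp: step_ok_def)
    qed
  qed
  have inv: "valid_config V m (cop_pos sc sr t) \<and> good (cop_pos sc sr t) (rob_pos sc sr t)" for t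
  proof (induction t)
    case 0
    have vc: "valid_config V m (sc [] [])" using leg unfolding legal_cop_strategy_def by blast
    then have ex: "\<exists>v. good (sc [] []) v" using H0 unfolding good_def by blast
    have "rob_pos sc sr 0 = (SOME v. good (sc [] []) v)" unfolding rob_pos_0 sr_def using ex by simp
    then show ?case using someI_ex[OF ex] vc by (simp add: cop_pos_0)
  next
    case (Suc t)
    define Cs where "Cs = fst (game_hist sc sr t)"
    define Rs where "Rs = snd (game_hist sc sr t)"
    have lCs: "last Cs = cop_pos sc sr t" "Cs \<noteq> []" unfolding Cs_def by (simp_all add: cop_pos_last gh_ne)
    have lRs: "last Rs = rob_pos sc sr t" "Rs \<noteq> []" unfolding Rs_def by (simp_all add: rob_pos_last gh_ne)
    have cS: "cop_pos sc sr (Suc t) = sc Cs Rs" unfolding Cs_def Rs_def by (rule cop_pos_Suc)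
    have vct: "valid_config V m (last Cs)" using Suc lCs by simp
    have mv: "valid_config V m (sc Cs Rs) \<and> (\<forall>i<m. step_ok E (last Cs i) (sc Cs Rs i))"
      using leg lCs vct unfolding legal_cop_strategy_def by blast
    have rt: "rob_pos sc sr t \<in> V" "\<forall>i<m. \<not> step_ok E (cop_pos sc sr t i) (rob_pos sc sr t)"
      using Suc unfolding good_def by auto
    have "\<exists>u\<in>V. step_ok E (rob_pos sc sr t) u \<and> (\<forall>i<m. \<not> step_ok E (sc Cs Rs i) u)"
      by (rule H1[of "last Cs"]) (use vct mv rt lCs in auto)
    then obtain u where u: "u \<in> V" "step_ok E (rob_pos sc sr t) u" "\<forall>i<m. \<not> step_ok E (sc Cs Rs i) u"
      by blast
    have ex: "\<exists>u. good (sc Cs Rs) u \<and> step_ok E (last Rs) u" unfolding good_def using u lRs(1) by (intro exI[of _ u]) simp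
    have rS: "rob_pos sc sr (Suc t) = sr (Cs @ [sc Cs Rs]) Rs"
    proof -
      have "fst (game_hist sc sr (Suc t)) = Cs @ [sc Cs Rs]"
        unfolding Cs_def Rs_def by (simp only: gh_Suc fst_conv)
      then show ?thesis unfolding rob_pos_Suc Rs_def by simp
    qed
    have "rob_pos sc sr (Suc t) = (SOME u. good (sc Cs Rs) u \<and> step_ok E (last Rs) u)"
    proof -
      have "sr (Cs @ [sc Cs Rs]) Rs = (SOME u. good (sc Cs Rs) u \<and> step_ok E (last Rs) u)"
        unfolding sr_def using lRs ex by simp
      then show ?thesis using rS by simp
    qed
    then show ?case using someI_ex[OF ex] cS mv by simp
  qed
  have "\<not> captured m sc sr"
  proof
    assume "captured m sc sr"
    then obtain t i where i: "i < m" and c: "cop_pos sc sr t i = rob_pos sc sr t \<or> cop_pos sc sr (Suc t) i = rob_pos sc sr t"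
      unfolding captured_def by blast
    have g: "\<not> step_ok E (cop_pos sc sr t i) (rob_pos sc sr t)" using inv[of t] i unfolding good_def by blast
    then have "cop_pos sc sr t i \<noteq> rob_pos sc sr t" by (auto simp: step_ok_def)
    moreover have "step_ok E (cop_pos sc sr t i) (cop_pos sc sr (Suc t) i)"
    proof -
      define Cs where "Cs = fst (game_hist sc sr t)"
      define Rs where "Rs = snd (game_hist sc sr t)"
      have lCs: "last Cs = cop_pos sc sr t" "Cs \<noteq> []" unfolding Cs_def by (simp_all add: cop_pos_last gh_ne)
      have "valid_config V m (last Cs)" using inv[of t] lCs by simp
      then have "\<forall>i<m. step_ok E (last Cs i) (sc Cs Rs i)"
        using leg lCs unfolding legal_cop_strategy_def by blast
      then show ?thesis using i lCs cop_pos_Suc[of sc sr t] unfolding Cs_def Rs_def by simp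
    qed
    ultimately show False using c g by auto
  qed
  then show False using win lr by blast
qed

context biaff begin

lemma closed_nbr_card: "c \<in> VV \<Longrightarrow> card {v \<in> VV. step_ok EE c v} \<le> Suc q"
proof -
  assume c: "c \<in> VV"
  have "{v \<in> VV. step_ok EE c v} \<subseteq> insert c {v \<in> VV. EE c v}" by (auto simp: step_ok_def)
  then have "card {v \<in> VV. step_ok EE c v} \<le> card (insert c {v \<in> VV. EE c v})"
    by (intro card_mono) (auto simp: VV_def)
  also have "\<dots> \<le> Suc (card {v \<in> VV. EE c v})" by (simp add: card_insert_if VV_def)
  also have "card {v \<in> VV. EE c v} \<le> q" using deg_bounds[OF c] by (simp add: Defs.degree_def)
  finally show ?thesis by simp
qed

lemma H0: assumes m: "m < s" and vc: "valid_config VV m c"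
  shows "\<exists>v\<in>VV. \<forall>i<m. \<not> step_ok EE (c i) v"
proof (rule ccontr)
  assume "\<not> ?thesis"
  then have "VV \<subseteq> (\<Union>i<m. {v \<in> VV. step_ok EE (c i) v})" by auto
  then have "card VV \<le> card (\<Union>i<m. {v \<in> VV. step_ok EE (c i) v})"
    by (intro card_mono) (auto simp: VV_def)
  also have "\<dots> \<le> (\<Sum>i<m. card {v \<in> VV. step_ok EE (c i) v})" by (rule card_UN_le) simp
  also have "\<dots> \<le> (\<Sum>i<m. Suc q)" using vc closed_nbr_card unfolding valid_config_def
    by (intro sum_mono) auto
  also have "\<dots> = m * Suc q" by simp
  finally have le: "q * q + s * q \<le> m * Suc q" by (simp add: card_VV)
  have "m * Suc q \<le> (s - 1) * Suc q" using m by (intro mult_le_mono1) simp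
  also have "(s - 1) * Suc q < q * q + s * q"
  proof -
    have "(s - 1) * Suc q = (s - 1) * q + (s - 1)" by simp
    also have "\<dots> \<le> s * q + (s - 1)" by (intro add_le_mono1 mult_le_mono1) simp
    also have "\<dots> < s * q + q * q" using sq q2 by (simp add: less_le_trans[of _ q "q*q"])
    finally show ?thesis by simp
  qed
  finally show False using le by simp
qed

lemma H1: assumes m: "m < s" and vc: "valid_config VV m c" and vc': "valid_config VV m c'"
  and mv: "\<forall>i<m. step_ok EE (c i) (c' i)" and r: "r \<in> VV" and nr: "\<forall>i<m. \<not> step_ok EE (c i) r"
  shows "\<exists>u\<in>VV. step_ok EE r u \<and> (\<forall>i<m. \<not> step_ok EE (c' i) u)"
proof -
  define Nb where "Nb = {u \<in> VV. EE r u}"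
  have fNb: "finite Nb" by (simp add: Nb_def VV_def)
  have cNb: "card Nb \<ge> s" using deg_bounds[OF r] by (simp add: Defs.degree_def Nb_def)
  define B where "B = (\<lambda>i. {u \<in> Nb. step_ok EE (c' i) u})"
  have B1: "card (B i) \<le> 1" if i: "i < m" for i
  proof -
    have fB: "finite (B i)" using fNb by (simp add: B_def)
    have ne: "c' i \<noteq> r" using mv nr i by auto
    have "\<forall>u1\<in>B i. \<forall>u2\<in>B i. u1 = u2"
    proof (intro ballI, rule ccontr)
      fix u1 u2 assume u1: "u1 \<in> B i" and u2: "u2 \<in> B i" and d: "u1 \<noteq> u2"
      have e: "EE r u1" "EE r u2" "step_ok EE (c' i) u1" "step_ok EE (c' i) u2"
        using u1 u2 by (auto simp: B_def Nb_def)
      show False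
      proof (cases "c' i = u1")
        case True
        then have "EE u1 u2" using e(4) d by (simp add: step_ok_def)
        then show False using no_triangle[OF e(1)] e(2) by blast
      next
        case F1: False
        show False
        proof (cases "c' i = u2")
          case True
          then have "EE u2 u1" using e(3) d by (auto simp: step_ok_def)
          then show False using no_triangle[OF e(2)] e(1) by blast
        next
          case False
          then have "EE (c' i) u1" "EE (c' i) u2" using e F1 by (auto simp: step_ok_def)
          then show False using common_nbr[of r "c' i" u1 u2] ne e d by auto
        qed
      qed
    qed
    then show ?thesis using fB by (simp add: card_le_Suc0_iff_eq)
  qed
  have "card (\<Union>i<m. B i) \<le> (\<Sum>i<m. card (B i))" by (rule card_UN_le) simp
  also have "\<dots> \<le> (\<Sum>i<m. 1)" using B1 by (intro sum_mono) auto
  also have "\<dots> = m" by simp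
  finally have "card (\<Union>i<m. B i) < card Nb" using m cNb by simp
  moreover have "finite (\<Union>i<m. B i)" using fNb by (simp add: B_def)
  ultimately have "\<not> Nb \<subseteq> (\<Union>i<m. B i)" using card_mono[of "\<Union>i<m. B i" Nb] by linarith
  then obtain u where u: "u \<in> Nb" "u \<notin> (\<Union>i<m. B i)" by blast
  then show ?thesis by (intro bexI[of _ u]) (auto simp: Nb_def B_def step_ok_def)
qed

lemma VV_ne: "VV \<noteq> {}" using ln_V[of 0 0] s2 q2 by auto

lemma lower: assumes "m < s" shows "\<not> cops_win VV EE m"
proof (rule robber_wins[OF VV_ne])
  show "\<And>c. valid_config VV m c \<Longrightarrow> \<exists>v\<in>VV. \<forall>i<m. \<not> step_ok EE (c i) v" using H0 assms by blast
  show "\<And>c c' r. valid_config VV m c \<Longrightarrow> valid_config VV m c' \<Longrightarrow> \<forall>i<m. step_ok EE (c i) (c' i) \<Longrightarrow>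
       r \<in> VV \<Longrightarrow> \<forall>i<m. \<not> step_ok EE (c i) r \<Longrightarrow> \<exists>u\<in>VV. step_ok EE r u \<and> (\<forall>i<m. \<not> step_ok EE (c' i) u)"
    using H1[OF assms] by blast
qed

end

context biaff begin

definition copstrat :: "(nat \<Rightarrow> nat) list \<Rightarrow> nat list \<Rightarrow> (nat \<Rightarrow> nat)" where
  "copstrat Cs Rs = (if Cs = [] then (\<lambda>i. ln 0 i) else
     (\<lambda>i. if step_ok EE (last Cs i) (last Rs) then last Rs
          else if (\<exists>p. EE (last Cs i) p \<and> EE p (last Rs)) then (SOME p. EE (last Cs i) p \<and> EE p (last Rs))
          else last Cs i))"

lemma copstrat_legal: "legal_cop_strategy VV EE q copstrat"
  unfolding legal_cop_strategy_def
proof (rule conjI)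
  show "valid_config VV q (copstrat [] [])"
    unfolding valid_config_def copstrat_def using ln_V s2 by auto
next
  show "\<forall>Cs Rs. Cs \<noteq> [] \<and> valid_config VV q (last Cs) \<longrightarrow>
        valid_config VV q (copstrat Cs Rs) \<and> (\<forall>i<q. step_ok EE (last Cs i) (copstrat Cs Rs i))"
  proof (intro allI impI)
  fix Cs Rs assume a: "Cs \<noteq> [] \<and> valid_config VV q (last Cs)"
  have step: "(copstrat Cs Rs i) \<in> VV \<and> step_ok EE (last Cs i) (copstrat Cs Rs i)" if i: "i < q" for i
  proof -
    have ci: "last Cs i \<in> VV" using a i by (simp add: valid_config_def)
    show ?thesis
    proof (cases "step_ok EE (last Cs i) (last Rs)")
      case True
      then have "last Rs \<in> VV" using ci EE_V by (auto simp: step_ok_def)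
      then show ?thesis using True a by (simp add: copstrat_def)
    next
      case F: False
      show ?thesis
      proof (cases "\<exists>p. EE (last Cs i) p \<and> EE p (last Rs)")
        case True
        have "EE (last Cs i) (SOME p. EE (last Cs i) p \<and> EE p (last Rs))"
          using someI_ex[OF True] by blast
        then show ?thesis using True F a EE_V by (simp add: copstrat_def step_ok_def)
      next
        case False then show ?thesis using F a ci by (auto simp: copstrat_def step_ok_def)
      qed
    qed
  qed
  show "valid_config VV q (copstrat Cs Rs) \<and> (\<forall>i<q. step_ok EE (last Cs i) (copstrat Cs Rs i))"
    using step by (simp add: valid_config_def)
  qed
qed

lemma upper: "cops_win VV EE q"
  unfolding cops_win_def
proof (intro exI conjI allI impI)
  show "legal_cop_strategy VV EE q copstrat" by (rule copstrat_legal)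
  fix sr assume lr: "legal_robber_strategy VV EE sr"
  let ?cp = "cop_pos copstrat sr" and ?rp = "rob_pos copstrat sr"
  have q0: "0 < q" "0 < s" using q2 s2 by auto
  have c0: "?cp 0 = (\<lambda>i. ln 0 i)" by (simp add: cop_pos_0 copstrat_def)
  have r0V: "?rp 0 \<in> VV" using lr unfolding legal_robber_strategy_def rob_pos_0 by blast
  define Cs0 where "Cs0 = fst (game_hist copstrat sr 0)"
  define Rs0 where "Rs0 = snd (game_hist copstrat sr 0)"
  have lC0: "last Cs0 = ?cp 0" "Cs0 \<noteq> []" unfolding Cs0_def by (simp only: cop_pos_last) (rule gh_ne(1))
  have lR0: "last Rs0 = ?rp 0" "Rs0 \<noteq> []" unfolding Rs0_def by (simp only: rob_pos_last) (rule gh_ne(2))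
  have c1: "?cp 1 i = (if step_ok EE (ln 0 i) (?rp 0) then ?rp 0
          else if (\<exists>p. EE (ln 0 i) p \<and> EE p (?rp 0)) then (SOME p. EE (ln 0 i) p \<and> EE p (?rp 0))
          else ln 0 i)" for i
    using cop_pos_Suc[of copstrat sr 0] lC0 lR0 c0 unfolding Cs0_def[symmetric] Rs0_def[symmetric]
    by (auto simp add: copstrat_def)
  have r1: "?rp 1 \<in> VV \<and> step_ok EE (?rp 0) (?rp 1)"
  proof -
    have "?rp 1 = sr (fst (game_hist copstrat sr 1)) Rs0" unfolding Rs0_def using rob_pos_Suc[of copstrat sr 0] by simp
    then show ?thesis using lr lR0 r0V unfolding legal_robber_strategy_def by metis
  qed
  show "captured q copstrat sr"
  proof (cases rule: VV_cases[OF r0V])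
    case (1 x y)
    define i where "i = bof 0 x y"
    have i: "i < q" "EE (ln 0 i) (?rp 0)" using bof[of 0 x y] 1 q0 EE_ln_pt by (auto simp: i_def)
    then have "?cp 1 i = ?rp 0" using c1[of i] by (simp add: step_ok_def)
    then show ?thesis unfolding captured_def using i by (metis One_nat_def)
  next
    case (2 m b)
    show ?thesis
    proof (cases "m = 0")
      case True
      then have "?cp 0 b = ?rp 0" using 2 c0 by simp
      then show ?thesis unfolding captured_def using 2 sq by (meson less_le_trans)
    next
      case False
      have P: "EE (ln 0 i) (?cp 1 i) \<and> EE (?cp 1 i) (?rp 0)" if i: "i < q" for i
      proof -
        have ns: "\<not> step_ok EE (ln 0 i) (?rp 0)"
          using EE_ln_ln[of 0 i m b] 2 i q0 False ln_inj[of 0 i m b] sq by (auto simp: step_ok_def)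
        have ex: "\<exists>p. EE (ln 0 i) p \<and> EE p (?rp 0)" using meet[of 0 m i b] 2 False i q0 by auto
        show ?thesis using c1[of i] ns ex someI_ex[OF ex] by simp
      qed
      define Cs1 where "Cs1 = fst (game_hist copstrat sr 1)"
      define Rs1 where "Rs1 = snd (game_hist copstrat sr 1)"
  have lC1: "last Cs1 = ?cp 1" "Cs1 \<noteq> []" unfolding Cs1_def by (simp only: cop_pos_last) (rule gh_ne(1))
  have lR1: "last Rs1 = ?rp 1" "Rs1 \<noteq> []" unfolding Rs1_def by (simp only: rob_pos_last) (rule gh_ne(2))
      show ?thesis
      proof (cases "?rp 1 = ?rp 0")
        case True
        have "step_ok EE (?cp 1 0) (?rp 1)" using P[of 0] q0 True by (simp add: step_ok_def)
        then have "?cp 2 0 = ?rp 1"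
          using cop_pos_Suc[of copstrat sr 1] lC1 lR1 unfolding Cs1_def[symmetric] Rs1_def[symmetric]
          by (simp add: copstrat_def numeral_2_eq_2)
        then show ?thesis unfolding captured_def using q0 by (metis numeral_2_eq_2 One_nat_def)
      next
        case False
        then have e: "EE (?rp 0) (?rp 1)" using r1 by (simp add: step_ok_def)
        obtain x y where xy: "x < q" "y < q" "?rp 1 = pt x y"
          using r1 e 2 EE_ln_ln by (metis VV_cases)
        define i where "i = bof 0 x y"
        have i: "i < q" "EE (ln 0 i) (?rp 1)" using bof[of 0 x y] xy q0 EE_ln_pt by (auto simp: i_def)
        have mq: "m < q" using 2 sq by simp
        have ne: "ln 0 i \<noteq> ?rp 0"
        proof
          assume "ln 0 i = ?rp 0"
          then have "ln 0 i = ln m b" using 2 by simp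
          then have "0 = m" using ln_inj[of 0 i m b] i q0 mq 2 by simp
          then show False using \<open>m \<noteq> 0\<close> by simp
        qed
        have "?cp 1 i = ?rp 1"
          using common_nbr[OF ne, of "?cp 1 i" "?rp 1"] P[OF i(1)] i(2) e EE_sym by blast
        then show ?thesis unfolding captured_def using i by blast
      qed
    qed
  qed
qed

end

context biaff begin

lemma cop_bounds: "s \<le> cop_number VV EE \<and> cop_number VV EE \<le> q"
proof -
  have le: "cop_number VV EE \<le> q" unfolding cop_number_def by (rule Least_le) (rule upper)
  have "cops_win VV EE (cop_number VV EE)" unfolding cop_number_def by (rule LeastI) (rule upper)
  then have "\<not> cop_number VV EE < s" using lower by blast
  then show ?thesis using le by simp
qed

end

theorem final_part:
  fixes k :: "nat \<Rightarrow> nat"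
  assumes kpos: "\<And>q. primepow q \<Longrightarrow> k q > 0"
    and ko: "\<forall>\<epsilon>>0. \<exists>N. \<forall>q\<ge>N. primepow q \<longrightarrow> real (k q) / real q < \<epsilon>"
    and gf: "\<And>q. primepow (q::nat) \<Longrightarrow> \<exists>g::nat\<Rightarrow>nat\<Rightarrow>nat\<Rightarrow>nat. (\<forall>m x b. m<q \<longrightarrow> x<q \<longrightarrow> b<q \<longrightarrow> g m x b < q) \<and>
     (\<forall>m x y. m<q \<longrightarrow> x<q \<longrightarrow> y<q \<longrightarrow> (\<exists>!b. b<q \<and> g m x b = y)) \<and>
     (\<forall>m m' b b'. m<q \<longrightarrow> m'<q \<longrightarrow> m\<noteq>m' \<longrightarrow> b<q \<longrightarrow> b'<q \<longrightarrow> (\<exists>!x. x<q \<and> g m x b = g m' x b'))"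
  shows "\<exists>N. \<forall>q\<ge>N. primepow q \<longrightarrow>
           (\<exists>(V :: nat set) E. simple_graph V E \<and> connected_graph V E \<and>
              int (card V) = 2 * int q ^ 2 + (1 - int (k q)) * int q \<and>
              (\<forall>v\<in>V. int (Defs.degree V E v) = int q + 1 - int (k q) \<or> Defs.degree V E v = q) \<and>
              int q + 1 - int (k q) \<le> int (cop_number V E) \<and> cop_number V E \<le> q)"
proof -
  obtain N0 where N0: "\<forall>q\<ge>N0. primepow q \<longrightarrow> real (k q) / real q < 1/2"
    using ko by (meson zero_less_divide_1_iff zero_less_numeral)
  show ?thesis
  proof (intro exI[of _ "max N0 4"] allI impI)
    fix q :: nat assume qN: "max N0 4 \<le> q" and pp: "primepow q"
    have q4: "q \<ge> 4" using qN by simp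
    have "N0 \<le> q" using qN by simp
    then have h: "real (k q) / real q < 1/2" using N0 pp by blast
    have qpos: "real q > 0" using q4 by simp
    have "2 * real (k q) < real q" using h qpos by (simp add: divide_less_eq)
    then have kq: "2 * k q < q" by linarith
    have k1: "k q \<ge> 1" using kpos[OF pp] by simp
    define s where "s = q + 1 - k q"
    have s2: "2 \<le> s" "s \<le> q" using kq k1 q4 by (simp_all add: s_def)
    from gf[OF pp] obtain g where gg: "(\<forall>m x b. m<q \<longrightarrow> x<q \<longrightarrow> b<q \<longrightarrow> g m x b < q) \<and>
      (\<forall>m x y. m<q \<longrightarrow> x<q \<longrightarrow> y<q \<longrightarrow> (\<exists>!b. b<q \<and> g m x b = y)) \<and>
      (\<forall>m m' b b'. m<q \<longrightarrow> m'<q \<longrightarrow> m\<noteq>m' \<longrightarrow> b<q \<longrightarrow> b'<q \<longrightarrow> (\<exists>!x. x<q \<and> g m x b = g m' x b'))" ..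
    note g = conjunct1[OF gg] conjunct1[OF conjunct2[OF gg]] conjunct2[OF conjunct2[OF gg]]
    interpret B: biaff q s g
    proof
      show "2 \<le> s" "s \<le> q" using s2 by auto
      show "\<And>m x b. m<q \<Longrightarrow> x<q \<Longrightarrow> b<q \<Longrightarrow> g m x b < q" using g(1) by blast
      show "\<And>m x y. m<q \<Longrightarrow> x<q \<Longrightarrow> y<q \<Longrightarrow> \<exists>!b. b<q \<and> g m x b = y" using g(2) by blast
      show "\<And>m m' b b'. m<q \<Longrightarrow> m'<q \<Longrightarrow> m\<noteq>m' \<Longrightarrow> b<q \<Longrightarrow> b'<q \<Longrightarrow> \<exists>!x. x<q \<and> g m x b = g m' x b'"
        using g(3) by blast
    qed
    have si: "int s = int q + 1 - int (k q)" using kq by (simp add: s_def)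
    show "\<exists>(V :: nat set) E. simple_graph V E \<and> connected_graph V E \<and>
              int (card V) = 2 * int q ^ 2 + (1 - int (k q)) * int q \<and>
              (\<forall>v\<in>V. int (Defs.degree V E v) = int q + 1 - int (k q) \<or> Defs.degree V E v = q) \<and>
              int q + 1 - int (k q) \<le> int (cop_number V E) \<and> cop_number V E \<le> q"
    proof (intro exI[of _ B.VV] exI[of _ B.EE] conjI)
      show "simple_graph B.VV B.EE" by (rule B.simple)
      show "connected_graph B.VV B.EE" by (rule B.conn)
      show "int (card B.VV) = 2 * int q ^ 2 + (1 - int (k q)) * int q"
        unfolding B.card_VV of_nat_add of_nat_mult si by (simp add: power2_eq_square algebra_simps)
      show "\<forall>v\<in>B.VV. int (Defs.degree B.VV B.EE v) = int q + 1 - int (k q) \<or> Defs.degree B.VV B.EE v = q"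
        using B.deg_vals si by fastforce
      show "int q + 1 - int (k q) \<le> int (cop_number B.VV B.EE)" using B.cop_bounds si by simp
      show "cop_number B.VV B.EE \<le> q" using B.cop_bounds by simp
    qed
  qed
qed

theorem theorem12:
  fixes k :: "nat \<Rightarrow> nat"
  assumes kpos: "\<And>q. primepow q \<Longrightarrow> k q > 0"
    and ko: "\<forall>\<epsilon>>0. \<exists>N. \<forall>q\<ge>N. primepow q \<longrightarrow> real (k q) / real q < \<epsilon>"
  shows "\<exists>N. \<forall>q\<ge>N. primepow q \<longrightarrow>
           (\<exists>(V :: nat set) E. simple_graph V E \<and> connected_graph V E \<and>
              int (card V) = 2 * int q ^ 2 + (1 - int (k q)) * int q \<and>
              (\<forall>v\<in>V. int (Defs.degree V E v) = int q + 1 - int (k q) \<or> Defs.degree V E v = q) \<and>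
              int q + 1 - int (k q) \<le> int (cop_number V E) \<and> cop_number V E \<le> q)"
  by (rule final_part[OF kpos ko gf_struct])

end
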